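(* Let $(X,\tau)$ be a zero-dimensional, perfect, compact $T_1$-space and let $(Y,\tau_d)$ be a dendrite with metric $d$. Then there exists a continuous, closed map $f$ of $X$ onto $Y$ such that the decomposition $\mathcal D_f=\{f^{-1}(y);\, y\in Y\}$ of $X$ is upper semicontinuous and the map $h:(Y,\tau_d)\to(\mathcal D_f,\tau(\mathcal D_f))$, $y\mapsto f^{-1}(y)$, is a homeomorphism. Consequently the decomposition space $(\mathcal D_f,\tau(\mathcal D_f))$ is metrizable by the metric $\rho(D,D')=d(h^{-1}(D),h^{-1}(D'))$ (i.e. $\tau(\mathcal D_f)=\tau_\rho$), and $(\mathcal D_f,\tau_\rho)$ is a dendrite.
   Context: A space is zero-dimensional if it has a base consisting of sets that are both closed and open (clopen). A space is perfect if it has no isolated points. A dendrite is a locally connected, connected, compact metric space containing no simple closed curve (no subspace homeomorphic to a circle). A decomposition $\mathcal D$ of a set $X$ is a collection of nonempty, pairwise disjoint subsets of $X$ whose union is $X$; for a topological space $(X,\tau)$ the decomposition topology is $\tau(\mathcal D)=\{\mathcal U\subset\mathcal D;\ \bigcup_{D\in\mathcal U}D\in\tau\}$, and $(\mathcal D,\tau(\mathcal D))$ is the decomposition space. A decomposition $\mathcal D$ is upper semicontinuous (usc) if for every $D\in\mathcal D$ and every open $U\supseteq D$ there is an open $u\supseteq D$ such that every $A\in\mathcal D$ with $A\cap u\neq\emptyset$ satisfies $A\subset U$. *)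

theory Defs
  imports "HOL-Analysis.Analysis"
begin

definition zero_dimensional_space :: "'a topology \<Rightarrow> bool" where
  "zero_dimensional_space X \<longleftrightarrow>
     (\<forall>U x. openin X U \<and> x \<in> U \<longrightarrow>
        (\<exists>V. openin X V \<and> closedin X V \<and> x \<in> V \<and> V \<subseteq> U))"

definition perfect_top_space :: "'a topology \<Rightarrow> bool" where
  "perfect_top_space X \<longleftrightarrow> (\<forall>x \<in> topspace X. \<not> openin X {x})"

definition dendrite :: "'b set \<Rightarrow> ('b \<Rightarrow> 'b \<Rightarrow> real) \<Rightarrow> bool" where
  "dendrite M d \<longleftrightarrow> Metric_space M d \<and> M \<noteq> {} \<and>
     locally_connected_space (Metric_space.mtopology M d) \<and>
     connected_space (Metric_space.mtopology M d) \<and>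
     compact_space (Metric_space.mtopology M d) \<and>
     \<not> (\<exists>S \<subseteq> M. subtopology (Metric_space.mtopology M d) S homeomorphic_space
                    top_of_set (sphere (0::complex) 1))"

definition decomposition :: "'a set \<Rightarrow> 'a set set \<Rightarrow> bool" where
  "decomposition S D \<longleftrightarrow> (\<forall>A\<in>D. A \<noteq> {}) \<and> pairwise disjnt D \<and> \<Union>D = S"

definition decomp_topology :: "'a topology \<Rightarrow> 'a set set \<Rightarrow> 'a set topology" where
  "decomp_topology X D = topology (\<lambda>U. U \<subseteq> D \<and> openin X (\<Union>U))"

definition usc_decomposition :: "'a topology \<Rightarrow> 'a set set \<Rightarrow> bool" where
  "usc_decomposition X D \<longleftrightarrow>
     (\<forall>A\<in>D. \<forall>U. openin X U \<and> A \<subseteq> U \<longrightarrow>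
        (\<exists>u. openin X u \<and> A \<subseteq> u \<and> (\<forall>B\<in>D. B \<inter> u \<noteq> {} \<longrightarrow> B \<subseteq> U)))"

lemma openin_decomp_topology:
  assumes "decomposition (topspace X) D"
  shows "openin (decomp_topology X D) U \<longleftrightarrow> U \<subseteq> D \<and> openin X (\<Union>U)"
proof -
  have "istopology (\<lambda>U. U \<subseteq> D \<and> openin X (\<Union>U))"
    unfolding istopology_def
  proof (rule conjI; intro allI impI)
    fix S T assume S: "S \<subseteq> D \<and> openin X (\<Union>S)" and T: "T \<subseteq> D \<and> openin X (\<Union>T)"
    have eq: "\<Union>(S \<inter> T) = \<Union>S \<inter> \<Union>T"
    proof
      show "\<Union>S \<inter> \<Union>T \<subseteq> \<Union>(S \<inter> T)"
      proof
        fix x assume "x \<in> \<Union>S \<inter> \<Union>T"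
        then obtain A B where "A \<in> S" "B \<in> T" "x \<in> A" "x \<in> B" by blast
        have "A \<in> D" "B \<in> D" using S T \<open>A \<in> S\<close> \<open>B \<in> T\<close> by auto
        with assms \<open>x \<in> A\<close> \<open>x \<in> B\<close> have "A = B"
          unfolding decomposition_def pairwise_def disjnt_def by blast
        with \<open>A \<in> S\<close> \<open>B \<in> T\<close> \<open>x \<in> A\<close> show "x \<in> \<Union>(S \<inter> T)" by blast
      qed
    qed blast
    have "openin X (\<Union>S \<inter> \<Union>T)" using S T by (intro openin_Int) auto
    then show "S \<inter> T \<subseteq> D \<and> openin X (\<Union>(S \<inter> T))" using S by (simp only: eq) blast
  next
    fix K assume "\<forall>S\<in>K. S \<subseteq> D \<and> openin X (\<Union>S)"
    show "\<Union>K \<subseteq> D \<and> openin X (\<Union>(\<Union>K))"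
    proof
      show "\<Union>K \<subseteq> D" using \<open>\<forall>S\<in>K. S \<subseteq> D \<and> openin X (\<Union>S)\<close> by blast
      have "\<Union>(\<Union>K) = \<Union>((\<lambda>S. \<Union>S) ` K)" by blast
      moreover have "openin X (\<Union>((\<lambda>S. \<Union>S) ` K))"
        using \<open>\<forall>S\<in>K. S \<subseteq> D \<and> openin X (\<Union>S)\<close> by (intro openin_Union) blast
      ultimately show "openin X (\<Union>(\<Union>K))" by simp
    qed
  qed
  then show ?thesis unfolding decomp_topology_def by simp
qed

end

theory Submission imports Defs begin


lemma clopen_split:
  assumes zd: "zero_dimensional_space X" and pf: "perfect_top_space X" and t1: "t1_space X"
    and P: "P \<noteq> {}" "openin X P" "closedin X P"
  shows "\<exists>A B. A \<inter> B = {} \<and> A \<union> B = P \<and> A \<noteq> {} \<and> B \<noteq> {} \<and>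
      openin X A \<and> closedin X A \<and> openin X B \<and> closedin X B"
proof -
  obtain x where x: "x \<in> P" using P by blast
  have xt: "x \<in> topspace X" using x P openin_subset by blast
  have "P \<noteq> {x}" using pf xt P(2) unfolding perfect_top_space_def by auto
  then obtain y where y: "y \<in> P" "y \<noteq> x" using x by blast
  have yt: "y \<in> topspace X" using y P openin_subset by blast
  obtain U where U: "openin X U" "x \<in> U" "y \<notin> U" using t1 xt yt y unfolding t1_space_def by metis
  obtain V where V: "openin X V" "closedin X V" "x \<in> V" "V \<subseteq> U \<inter> P"
    using zd U P x unfolding zero_dimensional_space_def by (meson IntI openin_Int)
  show ?thesis
    apply (rule exI[of _ V], rule exI[of _ "P - V"])
    using V P x y U by (auto intro: openin_diff closedin_diff)
qed

lemma clopen_partition: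
  assumes zd: "zero_dimensional_space X" and pf: "perfect_top_space X" and t1: "t1_space X"
    and C: "finite C" "C \<noteq> {}"
  shows "\<And>P. P \<noteq> {} \<Longrightarrow> openin X P \<Longrightarrow> closedin X P \<Longrightarrow>
    \<exists>g. (\<forall>c\<in>C. g c \<noteq> {} \<and> openin X (g c) \<and> closedin X (g c)) \<and>
       (\<forall>c\<in>C. \<forall>c'\<in>C. c \<noteq> c' \<longrightarrow> g c \<inter> g c' = {}) \<and> (\<Union>c\<in>C. g c) = P"
  using C
proof (induction C rule: finite_ne_induct)
  case (singleton c)
  then show ?case by (intro exI[of _ "\<lambda>_. P"]) auto
next
  case (insert c C)
  then obtain g where g: "\<forall>c\<in>C. g c \<noteq> {} \<and> openin X (g c) \<and> closedin X (g c)"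
       "\<forall>c\<in>C. \<forall>c'\<in>C. c \<noteq> c' \<longrightarrow> g c \<inter> g c' = {}" "(\<Union>c\<in>C. g c) = P" by blast
  obtain c0 where c0: "c0 \<in> C" using insert by blast
  obtain A B where AB: "A \<inter> B = {}" "A \<union> B = g c0" "A \<noteq> {}" "B \<noteq> {}"
      "openin X A" "closedin X A" "openin X B" "closedin X B"
    using clopen_split[OF zd pf t1, of "g c0"] g c0 by blast
  define g' where "g' = g(c0 := A, c := B)"
  have cc0: "c \<noteq> c0" using insert c0 by blast
  have 1: "\<forall>x\<in>insert c C. g' x \<noteq> {} \<and> openin X (g' x) \<and> closedin X (g' x)"
    using g AB cc0 unfolding g'_def by auto
  have 2: "\<forall>x\<in>insert c C. \<forall>x'\<in>insert c C. x \<noteq> x' \<longrightarrow> g' x \<inter> g' x' = {}"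
  proof (intro ballI impI)
    fix x x' assume xs: "x \<in> insert c C" "x' \<in> insert c C" "x \<noteq> x'"
    have sub: "\<And>z. z \<in> insert c C \<Longrightarrow> z \<noteq> c \<Longrightarrow> g' z \<subseteq> g z"
      using AB unfolding g'_def by auto
    have subc: "g' c \<subseteq> g c0" using AB unfolding g'_def by auto
    have dis: "\<And>z. z \<in> C \<Longrightarrow> z \<noteq> c0 \<Longrightarrow> g z \<inter> g c0 = {}" using g(2) c0 by blast
    show "g' x \<inter> g' x' = {}"
    proof (cases "x = c \<or> x' = c")
      case True
      show ?thesis
      proof (cases "x = c")
        case True
        then have x'C: "x' \<in> C" using xs by auto
        show ?thesis
        proof (cases "x' = c0")
          case True then show ?thesis using \<open>x = c\<close> AB cc0 unfolding g'_def by auto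
        next
          case False then show ?thesis using \<open>x = c\<close> x'C sub[of x'] subc dis[of x'] xs by blast
        qed
      next
        case False
        then have xC: "x \<in> C" "x' = c" using xs \<open>x = c \<or> x' = c\<close> by auto
        show ?thesis
        proof (cases "x = c0")
          case True then show ?thesis using xC AB cc0 unfolding g'_def by auto
        next
          case False then show ?thesis using xC sub[of x] subc dis[of x] xs by blast
        qed
      qed
    next
      case False
      then have "x \<in> C" "x' \<in> C" using xs by auto
      then show ?thesis using sub[of x] sub[of x'] g(2) xs False by blast
    qed
  qed
  have 3: "(\<Union>x\<in>insert c C. g' x) = P"
  proof -
    have "(\<Union>x\<in>insert c C. g' x) = B \<union> A \<union> (\<Union>x\<in>C-{c0}. g x)"
      unfolding g'_def using insert.hyps cc0 c0 by (auto split: if_splits)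
    also have "\<dots> = g c0 \<union> (\<Union>x\<in>C-{c0}. g x)" using AB by blast
    also have "\<dots> = P" using g(3) c0 by blast
    finally show ?thesis .
  qed
  show ?case using 1 2 3 by blast
qed




context Metric_space begin

lemma refine_step:
  assumes zd: "zero_dimensional_space X" and pf: "perfect_top_space X" and t1: "t1_space X"
    and cM: "compact_space mtopology"
    and P: "P \<noteq> {}" "openin X P" "closedin X P"
    and K: "K \<noteq> {}" "closedin mtopology K" and e: "\<epsilon> > 0"
  shows "\<exists>S. (\<forall>q\<in>S. fst q \<noteq> {} \<and> openin X (fst q) \<and> closedin X (fst q) \<and> fst q \<subseteq> P \<and>
               snd q \<noteq> {} \<and> closedin mtopology (snd q) \<and> snd q \<subseteq> K \<and>
               (\<forall>y\<in>snd q. \<forall>z\<in>snd q. d y z \<le> \<epsilon>)) \<and>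
            (\<forall>q\<in>S. \<forall>q'\<in>S. q \<noteq> q' \<longrightarrow> fst q \<inter> fst q' = {}) \<and>
            \<Union>(fst ` S) = P \<and> \<Union>(snd ` S) = K"
proof -
  have "compactin mtopology K" using closedin_compact_space[OF cM K(2)] .
  then have "mtotally_bounded K" by (rule compactin_imp_mtotally_bounded)
  then obtain C where C: "finite C" "C \<subseteq> K" "K \<subseteq> (\<Union>x\<in>C. mball x (\<epsilon>/2))"
    unfolding mtotally_bounded_def using e by (meson half_gt_zero)
  have KM: "K \<subseteq> M" using K(2) closedin_subset by fastforce
  have Cne: "C \<noteq> {}" using C K by auto
  obtain g where g: "\<forall>c\<in>C. g c \<noteq> {} \<and> openin X (g c) \<and> closedin X (g c)"
       "\<forall>c\<in>C. \<forall>c'\<in>C. c \<noteq> c' \<longrightarrow> g c \<inter> g c' = {}" "(\<Union>c\<in>C. g c) = P"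
    using clopen_partition[OF zd pf t1 C(1) Cne P] by blast
  define S where "S = (\<lambda>c. (g c, K \<inter> mcball c (\<epsilon>/2))) ` C"
  have 1: "\<forall>q\<in>S. fst q \<noteq> {} \<and> openin X (fst q) \<and> closedin X (fst q) \<and> fst q \<subseteq> P \<and>
               snd q \<noteq> {} \<and> closedin mtopology (snd q) \<and> snd q \<subseteq> K \<and>
               (\<forall>y\<in>snd q. \<forall>z\<in>snd q. d y z \<le> \<epsilon>)"
  proof
    fix q assume "q \<in> S"
    then obtain c where c: "c \<in> C" "q = (g c, K \<inter> mcball c (\<epsilon>/2))" unfolding S_def by blast
    have cK: "c \<in> K" "c \<in> M" using c C KM by auto
    have dd: "\<forall>y\<in>snd q. \<forall>z\<in>snd q. d y z \<le> \<epsilon>"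
    proof (intro ballI)
      fix y z assume "y \<in> snd q" "z \<in> snd q"
      then have "y \<in> M" "z \<in> M" "d c y \<le> \<epsilon>/2" "d c z \<le> \<epsilon>/2" using c by auto
      then have "d y z \<le> d y c + d c z" using cK triangle by blast
      also have "\<dots> \<le> \<epsilon>" using \<open>d c y \<le> \<epsilon>/2\<close> \<open>d c z \<le> \<epsilon>/2\<close> commute[of y c] \<open>y \<in> M\<close> cK by simp
      finally show "d y z \<le> \<epsilon>" .
    qed
    show "fst q \<noteq> {} \<and> openin X (fst q) \<and> closedin X (fst q) \<and> fst q \<subseteq> P \<and>
               snd q \<noteq> {} \<and> closedin mtopology (snd q) \<and> snd q \<subseteq> K \<and>
               (\<forall>y\<in>snd q. \<forall>z\<in>snd q. d y z \<le> \<epsilon>)"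
      using c g cK dd e K(2) by (auto intro!: closedin_Int)
  qed
  have 2: "\<forall>q\<in>S. \<forall>q'\<in>S. q \<noteq> q' \<longrightarrow> fst q \<inter> fst q' = {}"
  proof (intro ballI impI)
    fix q q' assume "q \<in> S" "q' \<in> S" "q \<noteq> q'"
    then obtain c c' where "c \<in> C" "c' \<in> C" "q = (g c, K \<inter> mcball c (\<epsilon>/2))"
       "q' = (g c', K \<inter> mcball c' (\<epsilon>/2))" unfolding S_def by blast
    moreover then have "c \<noteq> c'" using \<open>q \<noteq> q'\<close> by auto
    ultimately show "fst q \<inter> fst q' = {}" using g(2) by simp
  qed
  have 3: "\<Union>(fst ` S) = P" using g(3) unfolding S_def by (simp add: image_image)
  have 4: "\<Union>(snd ` S) = K"
  proof
    show "\<Union>(snd ` S) \<subseteq> K" unfolding S_def by auto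
    show "K \<subseteq> \<Union>(snd ` S)"
    proof
      fix y assume "y \<in> K"
      then obtain c where "c \<in> C" "y \<in> mball c (\<epsilon>/2)" using C by blast
      then show "y \<in> \<Union>(snd ` S)" unfolding S_def using \<open>y \<in> K\<close>
        by (force intro!: bexI[of _ "(g c, K \<inter> mcball c (\<epsilon>/2))"])
    qed
  qed
  show ?thesis using 1 2 3 4 by blast
qed

end



lemma nest_nonempty:
  assumes cT: "compact_space T" and cl: "\<And>n. closedin T (C n)" and ne: "\<And>n. C n \<noteq> {}"
    and dec: "\<And>n. C (Suc n) \<subseteq> C n"
  shows "\<Inter>(range C) \<noteq> {}"
proof -
  have mono: "C m \<subseteq> C n" if "n \<le> m" for m n
    using lift_Suc_antimono_le[of C, OF dec that] .
  have fin: "\<Inter>F \<noteq> {}" if F: "finite F" "F \<subseteq> range C" for F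
  proof -
    obtain N where N: "finite N" "F = C ` N" using finite_subset_image[OF F(1) F(2)] by blast
    show "\<Inter>F \<noteq> {}"
    proof (cases "N = {}")
      case True then show ?thesis using N by simp
    next
      case False
      have "C (Max N) \<subseteq> C n" if "n \<in> N" for n
        using mono Max_ge[OF N(1) that] by blast
      then have "C (Max N) \<subseteq> \<Inter>F" unfolding N(2) by blast
      then show ?thesis using ne[of "Max N"] by blast
    qed
  qed
  have cl': "\<forall>c\<in>range C. closedin T c" using cl by blast
  have "\<forall>F. finite F \<and> F \<subseteq> range C \<longrightarrow> \<Inter>F \<noteq> {}" using fin by blast
  with cl' show ?thesis using cT unfolding compact_space_fip by blast
qed

context Metric_space begin

lemma exists_onto:
  fixes X :: "'x topology"
  assumes zd: "zero_dimensional_space X" and pf: "perfect_top_space X" and t1: "t1_space X"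
    and cX: "compact_space X" and Xne: "topspace X \<noteq> {}"
    and cM: "compact_space mtopology" and Mne: "M \<noteq> {}"
  shows "\<exists>f. continuous_map X mtopology f \<and> f ` topspace X = M"
proof -
  define valid where "valid p \<longleftrightarrow> fst p \<noteq> {} \<and> openin X (fst p) \<and> closedin X (fst p) \<and>
     snd p \<noteq> {} \<and> closedin mtopology (snd p)" for p :: "'x set \<times> 'a set"
  define good where "good n p S \<longleftrightarrow> (\<forall>q\<in>S. fst q \<noteq> {} \<and> openin X (fst q) \<and> closedin X (fst q) \<and> fst q \<subseteq> fst p \<and>
               snd q \<noteq> {} \<and> closedin mtopology (snd q) \<and> snd q \<subseteq> snd p \<and>
               (\<forall>y\<in>snd q. \<forall>z\<in>snd q. d y z \<le> (1/2)^n)) \<and>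
            (\<forall>q\<in>S. \<forall>q'\<in>S. q \<noteq> q' \<longrightarrow> fst q \<inter> fst q' = {}) \<and>
            \<Union>(fst ` S) = fst p \<and> \<Union>(snd ` S) = snd p" for n :: nat and p S
  have exS: "\<exists>S. good n p S" if vp: "valid p" for n p
  proof -
    have vp': "fst p \<noteq> {}" "openin X (fst p)" "closedin X (fst p)" "snd p \<noteq> {}" "closedin mtopology (snd p)"
      using vp unfolding valid_def by auto
    have pos: "(0::real) < (1/2)^n" by simp
    show ?thesis unfolding good_def by (rule refine_step[OF zd pf t1 cM vp' pos])
  qed
  define R where "R n p = (SOME S. good n p S)" for n p
  have R: "good n p (R n p)" if "valid p" for n p unfolding R_def using exS[OF that] by (rule someI_ex)
  have G: "(\<forall>q\<in>R n p. fst q \<noteq> {} \<and> openin X (fst q) \<and> closedin X (fst q) \<and> fst q \<subseteq> fst p \<and>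
               snd q \<noteq> {} \<and> closedin mtopology (snd q) \<and> snd q \<subseteq> snd p \<and>
               (\<forall>y\<in>snd q. \<forall>z\<in>snd q. d y z \<le> (1/2)^n)) \<and> (\<forall>q\<in>R n p. \<forall>q'\<in>R n p. q \<noteq> q' \<longrightarrow> fst q \<inter> fst q' = {}) \<and>
      \<Union>(fst ` R n p) = fst p \<and> \<Union>(snd ` R n p) = snd p" if "valid p" for n p
    using R[OF that, of n] unfolding good_def .
  have Rall: "\<forall>q\<in>R n p. fst q \<noteq> {} \<and> openin X (fst q) \<and> closedin X (fst q) \<and> fst q \<subseteq> fst p \<and>
               snd q \<noteq> {} \<and> closedin mtopology (snd q) \<and> snd q \<subseteq> snd p \<and>
               (\<forall>y\<in>snd q. \<forall>z\<in>snd q. d y z \<le> (1/2)^n)" if "valid p" for n p using G[OF that] by (rule conjunct1)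
  have R_disj0: "\<forall>q\<in>R n p. \<forall>q'\<in>R n p. q \<noteq> q' \<longrightarrow> fst q \<inter> fst q' = {}" if "valid p" for n p
    using G[OF that] by (rule conjunct1[OF conjunct2])
  have R_fst: "\<Union>(fst ` R n p) = fst p" if "valid p" for n p using G[OF that] by (rule conjunct1[OF conjunct2[OF conjunct2]])
  have R_snd: "\<Union>(snd ` R n p) = snd p" if "valid p" for n p using G[OF that] by (rule conjunct2[OF conjunct2[OF conjunct2]])
  have Rq: "fst q \<noteq> {} \<and> openin X (fst q) \<and> closedin X (fst q) \<and> fst q \<subseteq> fst p \<and>
               snd q \<noteq> {} \<and> closedin mtopology (snd q) \<and> snd q \<subseteq> snd p \<and>
               (\<forall>y\<in>snd q. \<forall>z\<in>snd q. d y z \<le> (1/2)^n)" if "valid p" "q \<in> R n p" for n p q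
    using Rall[OF that(1)] that(2) by (rule bspec)
  have R_valid: "valid q" "fst q \<subseteq> fst p" "snd q \<subseteq> snd p" "\<forall>y\<in>snd q. \<forall>z\<in>snd q. d y z \<le> (1/2)^n"
    if "valid p" "q \<in> R n p" for n p q
    using Rq[OF that] unfolding valid_def by (elim conjE; simp)+
  have R_disj: "fst q \<inter> fst q' = {}" if "valid p" "q \<in> R n p" "q' \<in> R n p" "q \<noteq> q'" for n p q q'
    using R_disj0[OF that(1)] that(2-4) by blast
  define lev where "lev = rec_nat {(topspace X, M)} (\<lambda>n L. \<Union>p\<in>L. R n p)"
  have lev0: "lev 0 = {(topspace X, M)}" and levS: "\<And>n. lev (Suc n) = (\<Union>p\<in>lev n. R n p)"
    by (simp_all add: lev_def)
  have inv: "(\<forall>p\<in>lev n. valid p) \<and> (\<forall>p\<in>lev n. \<forall>q\<in>lev n. p \<noteq> q \<longrightarrow> fst p \<inter> fst q = {}) \<and>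
      \<Union>(fst ` lev n) = topspace X \<and> \<Union>(snd ` lev n) = M" for n
  proof (induction n)
    case 0
    show ?case unfolding lev0 valid_def using Xne Mne by auto
  next
    case (Suc n)
    have V: "\<And>p. p \<in> lev n \<Longrightarrow> valid p" using conjunct1[OF Suc.IH] by (rule bspec)
    have D: "\<forall>p\<in>lev n. \<forall>q\<in>lev n. p \<noteq> q \<longrightarrow> fst p \<inter> fst q = {}" using Suc.IH by (rule conjunct1[OF conjunct2])
    have F: "\<Union>(fst ` lev n) = topspace X" using Suc.IH by (rule conjunct1[OF conjunct2[OF conjunct2]])
    have S: "\<Union>(snd ` lev n) = M" using Suc.IH by (rule conjunct2[OF conjunct2[OF conjunct2]])
    have a: "\<forall>p\<in>lev (Suc n). valid p" unfolding levS using V R_valid(1) by blast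
    have b: "\<forall>p\<in>lev (Suc n). \<forall>q\<in>lev (Suc n). p \<noteq> q \<longrightarrow> fst p \<inter> fst q = {}"
    proof (intro ballI impI)
      fix q q' assume "q \<in> lev (Suc n)" "q' \<in> lev (Suc n)" "q \<noteq> q'"
      then obtain p p' where pp: "p \<in> lev n" "p' \<in> lev n" "q \<in> R n p" "q' \<in> R n p'" unfolding levS by blast
      show "fst q \<inter> fst q' = {}"
      proof (cases "p = p'")
        case True then show ?thesis using R_disj[OF V[OF pp(1)] pp(3)] pp(4) \<open>q \<noteq> q'\<close> by blast
      next
        case False
        then have "fst p \<inter> fst p' = {}" using D pp(1,2) by blast
        moreover have "fst q \<subseteq> fst p" "fst q' \<subseteq> fst p'" using R_valid(2) V pp by blast+
        ultimately show ?thesis by blast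
      qed
    qed
    have c: "\<Union>(fst ` lev (Suc n)) = topspace X"
    proof -
      have "\<Union>(fst ` lev (Suc n)) = (\<Union>p\<in>lev n. \<Union>(fst ` R n p))" unfolding levS by auto
      also have "\<dots> = (\<Union>p\<in>lev n. fst p)" using R_fst V by simp
      finally show ?thesis using F by simp
    qed
    have d: "\<Union>(snd ` lev (Suc n)) = M"
    proof -
      have "\<Union>(snd ` lev (Suc n)) = (\<Union>p\<in>lev n. \<Union>(snd ` R n p))" unfolding levS by auto
      also have "\<dots> = (\<Union>p\<in>lev n. snd p)" using R_snd V by simp
      finally show ?thesis using S by simp
    qed
    show ?case using a b c d by (intro conjI)
  qed
  have inv_valid: "\<And>p. p \<in> lev n \<Longrightarrow> valid p" 
    and inv_disj: "\<And>p q. p \<in> lev n \<Longrightarrow> q \<in> lev n \<Longrightarrow> p \<noteq> q \<Longrightarrow> fst p \<inter> fst q = {}"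
    and inv_fst: "\<Union>(fst ` lev n) = topspace X" and inv_snd: "\<Union>(snd ` lev n) = M" for n
    subgoal using conjunct1[OF inv[of n]] by (rule bspec)
    subgoal for p q using conjunct1[OF conjunct2[OF inv[of n]]] by blast
    subgoal using inv[of n] by (rule conjunct1[OF conjunct2[OF conjunct2]])
    subgoal using inv[of n] by (rule conjunct2[OF conjunct2[OF conjunct2]])
    done
  have diam: "\<And>p y z. p \<in> lev (Suc n) \<Longrightarrow> y \<in> snd p \<Longrightarrow> z \<in> snd p \<Longrightarrow> d y z \<le> (1/2)^n" for n
  proof -
    fix p y z assume "p \<in> lev (Suc n)" "y \<in> snd p" "z \<in> snd p"
    then obtain p0 where "p0 \<in> lev n" "p \<in> R n p0" unfolding levS by blast
    then show "d y z \<le> (1/2)^n" using R_valid(4)[OF inv_valid] \<open>y \<in> snd p\<close> \<open>z \<in> snd p\<close> by blast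
  qed
  have ex1: "\<exists>!p. p \<in> lev n \<and> x \<in> fst p" if "x \<in> topspace X" for n x
    using inv_fst[of n] inv_disj[of _ n] that by blast
  define pc where "pc n x = (THE p. p \<in> lev n \<and> x \<in> fst p)" for n x
  have pc: "pc n x \<in> lev n \<and> x \<in> fst (pc n x)" if "x \<in> topspace X" for n x
    unfolding pc_def using theI'[OF ex1[OF that]] .
  have pc_eq: "pc n x = p" if "p \<in> lev n" "x \<in> fst p" for n x p
  proof -
    have "x \<in> topspace X" using inv_fst[of n] that by blast
    then show ?thesis unfolding pc_def using the1_equality[OF ex1] that by blast
  qed
  have pc_Suc: "pc (Suc n) x \<in> R n (pc n x)" if x: "x \<in> topspace X" for n x
  proof -
    obtain p where p: "p \<in> lev n" "pc (Suc n) x \<in> R n p" using pc[OF x, of "Suc n"] unfolding levS by blast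
    have "fst (pc (Suc n) x) \<subseteq> fst p" using R_valid(2)[OF inv_valid[OF p(1)] p(2)] .
    then have "pc n x = p" using pc_eq[OF p(1)] pc[OF x, of "Suc n"] by blast
    then show ?thesis using p by simp
  qed
  have sub: "snd (pc (Suc n) x) \<subseteq> snd (pc n x) \<and> fst (pc (Suc n) x) \<subseteq> fst (pc n x)"
    if x: "x \<in> topspace X" for n x
    using R_valid(2,3)[OF inv_valid pc_Suc[OF x, of n]] pc[OF x, of n] by blast
  have validpc: "valid (pc n x)" if "x \<in> topspace X" for n x using pc[OF that] inv_valid by blast
  have uniq: "y = z" if x: "x \<in> topspace X" and y: "\<forall>n. y \<in> snd (pc n x)"
     and z: "\<forall>n. z \<in> snd (pc n x)" for x y z
  proof (rule ccontr)
    assume "y \<noteq> z"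
    have yM: "y \<in> M" "z \<in> M" using y z validpc[OF x, of 0] closedin_subset
      unfolding valid_def by fastforce+
    then have "d y z > 0" using \<open>y \<noteq> z\<close> by simp
    then obtain n where "(1/2::real)^n < d y z" using real_arch_pow_inv[of "d y z" "1/2"] by auto
    moreover have "d y z \<le> (1/2)^n" using diam[of "pc (Suc n) x" n y z] pc[OF x, of "Suc n"] y z by blast
    ultimately show False by simp
  qed
  define f where "f x = (SOME y. \<forall>n. y \<in> snd (pc n x))" for x
  have fprop: "\<forall>n. f x \<in> snd (pc n x)" if x: "x \<in> topspace X" for x
  proof -
    have "\<Inter>(range (\<lambda>n. snd (pc n x))) \<noteq> {}"
      apply (rule nest_nonempty[OF cM])
      using validpc[OF x] sub[OF x] unfolding valid_def by auto
    then have "\<exists>y. \<forall>n. y \<in> snd (pc n x)" by blast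
    then show ?thesis unfolding f_def by (rule someI_ex)
  qed
  have fM: "f x \<in> M" if x: "x \<in> topspace X" for x
    using fprop[OF x] validpc[OF x, of 0] closedin_subset unfolding valid_def by fastforce
  have cont: "continuous_map X mtopology f"
    unfolding continuous_map_to_metric
  proof (intro ballI allI impI)
    fix x and \<epsilon> :: real assume x: "x \<in> topspace X" and e: "\<epsilon> > 0"
    obtain n where n: "(1/2::real)^n < \<epsilon>" using real_arch_pow_inv[of \<epsilon> "1/2"] e by auto
    let ?U = "fst (pc (Suc n) x)"
    have "openin X ?U" using validpc[OF x] unfolding valid_def by blast
    moreover have "x \<in> ?U" using pc[OF x] by blast
    moreover have "\<forall>y\<in>?U. f y \<in> mball (f x) \<epsilon>"
    proof
      fix y assume y: "y \<in> ?U"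
      have yt: "y \<in> topspace X" using y \<open>openin X ?U\<close> openin_subset by blast
      have "pc (Suc n) y = pc (Suc n) x" using pc_eq[of "pc (Suc n) x" "Suc n" y] pc[OF x] y by blast
      then have "f y \<in> snd (pc (Suc n) x)" using fprop[OF yt] by metis
      then have "d (f x) (f y) \<le> (1/2)^n" using diam[of "pc (Suc n) x" n] pc[OF x] fprop[OF x] by blast
      then show "f y \<in> mball (f x) \<epsilon>" using n fM x yt by simp
    qed
    ultimately show "\<exists>U. openin X U \<and> x \<in> U \<and> (\<forall>y\<in>U. f y \<in> mball (f x) \<epsilon>)" by blast
  qed
  have onto: "f ` topspace X = M"
  proof
    show "f ` topspace X \<subseteq> M" using fM by blast
    show "M \<subseteq> f ` topspace X"
    proof
      fix y assume yM: "y \<in> M"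
      define s where "s = rec_nat (topspace X, M) (\<lambda>n p. SOME q. q \<in> R n p \<and> y \<in> snd q)"
      have s0: "s 0 = (topspace X, M)" and sS: "\<And>n. s (Suc n) = (SOME q. q \<in> R n (s n) \<and> y \<in> snd q)"
        by (simp_all add: s_def)
      have sinv: "s n \<in> lev n \<and> y \<in> snd (s n)" for n
      proof (induction n)
        case 0 then show ?case using s0 lev0 yM by simp
      next
        case (Suc n)
        have "\<exists>q. q \<in> R n (s n) \<and> y \<in> snd q" using Suc R_snd[OF inv_valid, of "s n" n n] by blast
        then have "s (Suc n) \<in> R n (s n) \<and> y \<in> snd (s (Suc n))" unfolding sS by (rule someI_ex)
        then show ?case using Suc unfolding levS by blast
      qed
      have ssub: "fst (s (Suc n)) \<subseteq> fst (s n)" for n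
      proof -
        have vs: "valid (s n)" using sinv inv_valid by blast
        moreover have "s (Suc n) \<in> R n (s n)"
        proof -
          have "\<exists>q. q \<in> R n (s n) \<and> y \<in> snd q" using R_snd[OF vs, of n] sinv[of n] by blast
          then show ?thesis unfolding sS by (metis (mono_tags, lifting) someI_ex)
        qed
        ultimately show ?thesis using R_valid(2) by blast
      qed
      have vsn: "valid (s n)" for n using sinv[of n] inv_valid by blast
      have "\<Inter>(range (\<lambda>n. fst (s n))) \<noteq> {}"
        apply (rule nest_nonempty[OF cX])
        using vsn ssub unfolding valid_def by auto
      then obtain x where x: "\<forall>n. x \<in> fst (s n)" by blast
      have xt: "x \<in> topspace X" using x[rule_format, of 0] s0 by simp
      have "pc n x = s n" for n using pc_eq[of "s n" n x] sinv x by blast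
      then have "\<forall>n. y \<in> snd (pc n x)" using sinv by simp
      then have "f x = y" using uniq[OF xt fprop[OF xt]] by blast
      then show "y \<in> f ` topspace X" using xt by blast
    qed
  qed
  show ?thesis using cont onto by blast
qed

end



lemma Metric_space_pullback:
  assumes "Metric_space M d" "bij_betw g D M"
  shows "Metric_space D (\<lambda>a b. d (g a) (g b))"
proof -
  interpret Metric_space M d by fact
  have gi: "inj_on g D" "g ` D = M" using assms(2) unfolding bij_betw_def by auto
  show ?thesis
  proof
    fix x y z
    show "0 \<le> d (g x) (g y)" by simp
    show "d (g x) (g y) = d (g y) (g x)" by (rule commute)
    assume "x \<in> D" "y \<in> D"
    then show "d (g x) (g y) = 0 \<longleftrightarrow> x = y" using gi inj_onD[OF gi(1)] by auto
    assume "z \<in> D"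
    then show "d (g x) (g z) \<le> d (g x) (g y) + d (g y) (g z)" using gi \<open>x \<in> D\<close> \<open>y \<in> D\<close> triangle by blast
  qed
qed

lemma mtopology_pullback:
  assumes "Metric_space M d" "bij_betw g D M" "U \<subseteq> D"
  shows "openin (Metric_space.mtopology D (\<lambda>a b. d (g a) (g b))) U \<longleftrightarrow>
         openin (Metric_space.mtopology M d) (g ` U)"
proof -
  interpret M: Metric_space M d by fact
  interpret N: Metric_space D "\<lambda>a b. d (g a) (g b)" using Metric_space_pullback[OF assms(1,2)] .
  have gi: "inj_on g D" "g ` D = M" using assms(2) unfolding bij_betw_def by auto
  have ball: "g ` N.mball x r = M.mball (g x) r" if "x \<in> D" for x r
  proof
    show "g ` N.mball x r \<subseteq> M.mball (g x) r"
    proof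
      fix y assume "y \<in> g ` N.mball x r"
      then obtain z where z: "z \<in> D" "d (g x) (g z) < r" "y = g z" by auto
      moreover have "g z \<in> M" "g x \<in> M" using gi that z(1) by blast+
      ultimately show "y \<in> M.mball (g x) r" by simp
    qed
    show "M.mball (g x) r \<subseteq> g ` N.mball x r"
    proof
      fix y assume "y \<in> M.mball (g x) r"
      then obtain z where "z \<in> D" "y = g z" using gi by auto
      then show "y \<in> g ` N.mball x r" using \<open>y \<in> M.mball (g x) r\<close> that by auto
    qed
  qed
  have sub: "N.mball x r \<subseteq> U \<longleftrightarrow> g ` N.mball x r \<subseteq> g ` U" if "x \<in> D" for x r
  proof
    assume "g ` N.mball x r \<subseteq> g ` U"
    show "N.mball x r \<subseteq> U"
    proof
      fix z assume z: "z \<in> N.mball x r"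
      then have zD: "z \<in> D" by simp
      have "g z \<in> g ` U" using z \<open>g ` N.mball x r \<subseteq> g ` U\<close> by blast
      then obtain u where u: "u \<in> U" "g z = g u" by blast
      then have "z = u" using inj_onD[OF gi(1) u(2) zD] assms(3) by blast
      then show "z \<in> U" using u by simp
    qed
  qed blast
  have gU: "g ` U \<subseteq> M" using gi assms(3) by blast
  show ?thesis
  proof
    assume "openin N.mtopology U"
    then have h: "\<forall>x\<in>U. \<exists>r>0. N.mball x r \<subseteq> U" unfolding N.openin_mtopology by blast
    show "openin M.mtopology (g ` U)" unfolding M.openin_mtopology
    proof (intro conjI gU allI impI)
      fix y assume "y \<in> g ` U"
      then obtain x where x: "x \<in> U" "y = g x" by blast
      then obtain r where "r > 0" "N.mball x r \<subseteq> U" using h by blast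
      moreover have "x \<in> D" using x assms(3) by blast
      ultimately have "M.mball y r \<subseteq> g ` U" using ball[of x r] x(2) by blast
      then show "\<exists>r>0. M.mball y r \<subseteq> g ` U" using \<open>r > 0\<close> by blast
    qed
  next
    assume "openin M.mtopology (g ` U)"
    then have h: "\<forall>y\<in>g ` U. \<exists>r>0. M.mball y r \<subseteq> g ` U" unfolding M.openin_mtopology by blast
    show "openin N.mtopology U" unfolding N.openin_mtopology
    proof (intro conjI assms(3) allI impI)
      fix x assume x: "x \<in> U"
      then obtain r where "r > 0" "M.mball (g x) r \<subseteq> g ` U" using h by blast
      moreover have xD: "x \<in> D" using x assms(3) by blast
      ultimately have "g ` N.mball x r \<subseteq> g ` U" using ball[OF xD, of r] by simp
      then have "N.mball x r \<subseteq> U" using sub[OF xD] by blast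
      then show "\<exists>r>0. N.mball x r \<subseteq> U" using \<open>r > 0\<close> by blast
    qed
  qed
qed




theorem mainTheorem1:
  fixes X :: "'a topology" and M :: "'b set" and d :: "'b \<Rightarrow> 'b \<Rightarrow> real"
  assumes "zero_dimensional_space X" and "perfect_top_space X"
    and "compact_space X" and "t1_space X" and "topspace X \<noteq> {}"
    and "dendrite M d"
  shows "\<exists>f. continuous_map X (Metric_space.mtopology M d) f
           \<and> closed_map X (Metric_space.mtopology M d) f
           \<and> f ` topspace X = M
           \<and> (let h = (\<lambda>y. {x \<in> topspace X. f x = y});
                 Df = h ` M;
                 \<rho> = (\<lambda>D D'. d (inv_into M h D) (inv_into M h D'))
             in decomposition (topspace X) Df
                \<and> usc_decomposition X Df
                \<and> homeomorphic_map (Metric_space.mtopology M d) (decomp_topology X Df) h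
                \<and> Metric_space Df \<rho>
                \<and> decomp_topology X Df = Metric_space.mtopology Df \<rho>
                \<and> dendrite Df \<rho>)"
proof -
  note zd = assms(1) and pf = assms(2) and cX = assms(3) and t1 = assms(4) and Xne = assms(5)
  have MS: "Metric_space M d" and Mne: "M \<noteq> {}"
    and lcM: "locally_connected_space (Metric_space.mtopology M d)"
    and cnM: "connected_space (Metric_space.mtopology M d)"
    and cM: "compact_space (Metric_space.mtopology M d)"
    and circ: "\<not> (\<exists>S \<subseteq> M. subtopology (Metric_space.mtopology M d) S homeomorphic_space
                    top_of_set (sphere (0::complex) 1))"
    using assms(6) unfolding dendrite_def by blast+
  interpret Metric_space M d by (rule MS)
  obtain f where cont: "continuous_map X mtopology f" and onto: "f ` topspace X = M"
    using exists_onto[OF zd pf t1 cX Xne cM Mne] by blast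
  have clm: "closed_map X mtopology f"
    by (rule continuous_imp_closed_map[OF cont cX Hausdorff_space_mtopology])
  define h where "h = (\<lambda>y. {x \<in> topspace X. f x = y})"
  define Df where "Df = h ` M"
  define g where "g = inv_into M h"
  define \<rho> where "\<rho> = (\<lambda>D D'. d (g D) (g D'))"
  have fM: "f x \<in> M" if "x \<in> topspace X" for x using onto that by blast
  have hne: "h y \<noteq> {}" if "y \<in> M" for y
  proof -
    have "y \<in> f ` topspace X" using onto that by simp
    then obtain x where "x \<in> topspace X" "y = f x" by (rule imageE)
    then have "x \<in> h y" unfolding h_def by simp
    then show ?thesis by blast
  qed
  have hinj: "inj_on h M"
  proof (rule inj_onI)
    fix y z assume "y \<in> M" "z \<in> M" "h y = h z"
    obtain x where "x \<in> h y" using hne[OF \<open>y \<in> M\<close>] by blast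
    then have "x \<in> h z" using \<open>h y = h z\<close> by simp
    then show "y = z" using \<open>x \<in> h y\<close> unfolding h_def by simp
  qed
  have bij_h: "bij_betw h M Df" unfolding Df_def using hinj by (simp add: bij_betw_def)
  have bij_g: "bij_betw g Df M" unfolding g_def using bij_betw_inv_into[OF bij_h] .
  have gh: "g (h y) = y" if "y \<in> M" for y unfolding g_def using inv_into_f_f[OF hinj that] .
  have hg: "h (g D) = D" if "D \<in> Df" for D unfolding g_def
    by (rule f_inv_into_f) (use that in \<open>simp add: Df_def\<close>)
  have gM: "g D \<in> M" if "D \<in> Df" for D unfolding g_def
    by (rule inv_into_into) (use that in \<open>simp add: Df_def\<close>)
  have hx: "x \<in> h (f x)" if "x \<in> topspace X" for x unfolding h_def using that by simp
  have inh: "x \<in> h y \<longleftrightarrow> x \<in> topspace X \<and> f x = y" for x y unfolding h_def by simp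
  have hsub: "h y \<subseteq> topspace X" for y unfolding h_def by blast
  have F1: "decomposition (topspace X) Df"
    unfolding decomposition_def
  proof (intro conjI)
    show "\<forall>A\<in>Df. A \<noteq> {}" unfolding Df_def using hne by blast
    show "pairwise disjnt Df"
      unfolding pairwise_def disjnt_def Df_def
    proof (intro ballI impI)
      fix A B assume "A \<in> h ` M" "B \<in> h ` M" "A \<noteq> B"
      then obtain y z where "A = h y" "B = h z" by blast
      then show "A \<inter> B = {}" using \<open>A \<noteq> B\<close> unfolding h_def by auto
    qed
    show "\<Union>Df = topspace X"
    proof
      show "\<Union>Df \<subseteq> topspace X" unfolding Df_def using hsub by blast
      show "topspace X \<subseteq> \<Union>Df" unfolding Df_def using hx fM by blast
    qed
  qed
  have opD: "openin (decomp_topology X Df) U \<longleftrightarrow> U \<subseteq> Df \<and> openin X (\<Union>U)" for U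
    using openin_decomp_topology[OF F1] .
  have UDf: "\<Union>Df = topspace X" using F1 unfolding decomposition_def by blast
  have topD: "topspace (decomp_topology X Df) = Df"
  proof
    show "topspace (decomp_topology X Df) \<subseteq> Df" using opD[of "topspace (decomp_topology X Df)"] by simp
    show "Df \<subseteq> topspace (decomp_topology X Df)" using opD[of Df] UDf openin_subset by force
  qed
  have compl: "{y \<in> M. h y \<in> U} = M - f ` (topspace X - \<Union>U)" if U: "U \<subseteq> Df" for U
  proof
    show "{y \<in> M. h y \<in> U} \<subseteq> M - f ` (topspace X - \<Union>U)"
    proof
      fix y assume y: "y \<in> {y \<in> M. h y \<in> U}"
      have "y \<notin> f ` (topspace X - \<Union>U)"
      proof
        assume "y \<in> f ` (topspace X - \<Union>U)"
        then obtain x where "x \<in> topspace X" "x \<notin> \<Union>U" "y = f x" by blast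
        then have "x \<in> h y" using inh by simp
        then show False using y \<open>x \<notin> \<Union>U\<close> by blast
      qed
      then show "y \<in> M - f ` (topspace X - \<Union>U)" using y by blast
    qed
    show "M - f ` (topspace X - \<Union>U) \<subseteq> {y \<in> M. h y \<in> U}"
    proof
      fix y assume y: "y \<in> M - f ` (topspace X - \<Union>U)"
      obtain x where x: "x \<in> h y" using hne y by blast
      then have xt: "x \<in> topspace X" "f x = y" using inh by auto
      then have "x \<in> \<Union>U" using y by blast
      then obtain A where "A \<in> U" "x \<in> A" by blast
      then obtain z where "z \<in> M" "A = h z" using U unfolding Df_def by blast
      then have "z = y" using \<open>x \<in> A\<close> xt inh by simp
      then show "y \<in> {y \<in> M. h y \<in> U}" using \<open>A \<in> U\<close> \<open>A = h z\<close> y by blast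
    qed
  qed
  have hcont: "continuous_map mtopology (decomp_topology X Df) h"
    unfolding continuous_map_def
  proof (intro conjI allI impI)
    show "h \<in> topspace mtopology \<rightarrow> topspace (decomp_topology X Df)"
      using topD unfolding Df_def by auto
    fix U assume "openin (decomp_topology X Df) U"
    then have U: "U \<subseteq> Df" "openin X (\<Union>U)" using opD by auto
    have "closedin X (topspace X - \<Union>U)" using U(2) by blast
    then have "closedin mtopology (f ` (topspace X - \<Union>U))" using clm unfolding closed_map_def by blast
    then have "openin mtopology (M - f ` (topspace X - \<Union>U))"
      using openin_diff[OF openin_topspace[of mtopology]] by simp
    then show "openin mtopology {x \<in> topspace mtopology. h x \<in> U}" using compl[OF U(1)] by simp
  qed
  have hopen: "open_map mtopology (decomp_topology X Df) h"
    unfolding open_map_def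
  proof (intro allI impI)
    fix V assume V: "openin mtopology V"
    then have VM: "V \<subseteq> M" using openin_subset by force
    have "\<Union>(h ` V) = {x \<in> topspace X. f x \<in> V}" unfolding h_def by auto
    then have "openin X (\<Union>(h ` V))" using openin_continuous_map_preimage[OF cont V] by simp
    moreover have "h ` V \<subseteq> Df" unfolding Df_def using VM by blast
    ultimately show "openin (decomp_topology X Df) (h ` V)" using opD by blast
  qed
  have F3: "homeomorphic_map mtopology (decomp_topology X Df) h"
    by (rule bijective_open_imp_homeomorphic_map[OF hcont hopen]) (simp_all add: topD hinj Df_def[symmetric])
  have F2: "usc_decomposition X Df"
    unfolding usc_decomposition_def
  proof (intro ballI allI impI)
    fix A U assume A: "A \<in> Df" and U: "openin X U \<and> A \<subseteq> U"
    obtain y where y: "y \<in> M" "A = h y" using A unfolding Df_def by blast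
    define u where "u = {x \<in> topspace X. f x \<in> M - f ` (topspace X - U)}"
    have "closedin X (topspace X - U)" using U by blast
    then have "closedin mtopology (f ` (topspace X - U))" using clm unfolding closed_map_def by blast
    then have "openin mtopology (M - f ` (topspace X - U))"
      using openin_diff[OF openin_topspace[of mtopology]] by simp
    then have uo: "openin X u" unfolding u_def by (rule openin_continuous_map_preimage[OF cont])
    have Au: "A \<subseteq> u"
    proof
      fix x assume "x \<in> A"
      then have xt: "x \<in> topspace X" "f x = y" using y inh by auto
      have "f x \<notin> f ` (topspace X - U)"
      proof
        assume "f x \<in> f ` (topspace X - U)"
        then obtain x' where x': "x' \<in> topspace X - U" "f x = f x'" by (rule imageE)
        then have "x' \<in> A" using y xt inh by simp
        then show False using U x'(1) by blast
      qed
      then show "x \<in> u" unfolding u_def using xt fM by blast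
    qed
    have Bu: "\<forall>B\<in>Df. B \<inter> u \<noteq> {} \<longrightarrow> B \<subseteq> U"
    proof (intro ballI impI)
      fix B assume B: "B \<in> Df" "B \<inter> u \<noteq> {}"
      obtain z where z: "z \<in> M" "B = h z" using B unfolding Df_def by blast
      obtain x where x: "x \<in> B" "x \<in> u" using B by blast
      then have "f x = z" using z inh by simp
      then have zn: "z \<notin> f ` (topspace X - U)" using x(2) unfolding u_def by blast
      show "B \<subseteq> U"
      proof
        fix x' assume "x' \<in> B"
        then have "x' \<in> topspace X" "f x' = z" using z inh by auto
        then show "x' \<in> U" using zn by blast
      qed
    qed
    show "\<exists>u. openin X u \<and> A \<subseteq> u \<and> (\<forall>B\<in>Df. B \<inter> u \<noteq> {} \<longrightarrow> B \<subseteq> U)"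
      using uo Au Bu by blast
  qed
  have F4: "Metric_space Df \<rho>" unfolding \<rho>_def by (rule Metric_space_pullback[OF MS bij_g])
  interpret N: Metric_space Df \<rho> by (rule F4)
  have gU: "g ` U \<subseteq> M" if "U \<subseteq> Df" for U using gM that by blast
  have hgU: "h ` (g ` U) = U" if "U \<subseteq> Df" for U
  proof -
    have "h ` (g ` U) = (\<lambda>D. h (g D)) ` U" by (simp add: image_image)
    also have "\<dots> = U" using hg that by (simp add: subset_iff)
    finally show ?thesis .
  qed
  have F5: "decomp_topology X Df = N.mtopology"
    unfolding topology_eq
  proof
    fix U
    show "openin (decomp_topology X Df) U \<longleftrightarrow> openin N.mtopology U"
    proof (cases "U \<subseteq> Df")
      case True
      have "openin (decomp_topology X Df) U \<longleftrightarrow> openin mtopology (g ` U)"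
        using homeomorphic_map_openness[OF F3, of "g ` U"] gU[OF True] hgU[OF True] by simp
      also have "\<dots> \<longleftrightarrow> openin N.mtopology U"
        using mtopology_pullback[OF MS bij_g True] unfolding \<rho>_def by simp
      finally show ?thesis .
    next
      case False
      have "\<not> openin (decomp_topology X Df) U" using False opD by blast
      moreover have "\<not> openin N.mtopology U" using False N.openin_mtopology by blast
      ultimately show ?thesis by blast
    qed
  qed
  have hs: "mtopology homeomorphic_space N.mtopology"
    using homeomorphic_map_imp_homeomorphic_space[OF F3] F5 by simp
  have F6: "dendrite Df \<rho>"
    unfolding dendrite_def
  proof (intro conjI)
    show "Metric_space Df \<rho>" by (rule F4)
    show "Df \<noteq> {}" unfolding Df_def using Mne by blast
    show "locally_connected_space N.mtopology" using homeomorphic_locally_connected_space[OF hs] lcM by simp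
    show "connected_space N.mtopology" using homeomorphic_connected_space[OF hs] cnM by simp
    show "compact_space N.mtopology" using homeomorphic_compact_space[OF hs] cM by simp
    show "\<not> (\<exists>S \<subseteq> Df. subtopology N.mtopology S homeomorphic_space top_of_set (sphere (0::complex) 1))"
    proof
      assume "\<exists>S \<subseteq> Df. subtopology N.mtopology S homeomorphic_space top_of_set (sphere (0::complex) 1)"
      then obtain S where S: "S \<subseteq> Df" "subtopology N.mtopology S homeomorphic_space top_of_set (sphere (0::complex) 1)"
        by blast
      have F3': "homeomorphic_map mtopology N.mtopology h" using F3 F5 by simp
      have "h ` (topspace mtopology \<inter> g ` S) = topspace N.mtopology \<inter> S"
        using hgU[OF S(1)] gU[OF S(1)] S(1) by (simp add: Int_absorb1)
      then have "homeomorphic_map (subtopology mtopology (g ` S)) (subtopology N.mtopology S) h"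
        by (rule homeomorphic_map_subtopologies[OF F3'])
      then have "subtopology mtopology (g ` S) homeomorphic_space subtopology N.mtopology S"
        by (rule homeomorphic_map_imp_homeomorphic_space)
      then have "subtopology mtopology (g ` S) homeomorphic_space top_of_set (sphere (0::complex) 1)"
        using S(2) homeomorphic_space_trans by blast
      then show False using circ gU[OF S(1)] by blast
    qed
  qed
  show ?thesis
    unfolding Let_def
    apply (rule exI[of _ f])
    using cont clm onto F1 F2 F3 F4 F5 F6 unfolding h_def Df_def \<rho>_def g_def
    by (intro conjI)
qed


end
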